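(* Let $C$ be a strictly convex subset of a topological real vector space $V$ and $f:C\to\mathbb{R}$ a continuous function (for the subspace topology on $C$). If $f$ is strictly quasi-convex, then $f$ is strictly sub-convex. In particular, if $f$ is continuous and strictly convex, then $f$ is strictly sub-convex.
   Context: Topological real vector spaces are not assumed Hausdorff. $f$ is strictly quasi-convex if $f((1-t)x+ty)<\max\{f(x),f(y)\}$ for all distinct $x,y\in C$, $t\in(0,1)$; strictly convex if $f((1-t)x+ty)<(1-t)f(x)+tf(y)$ for such $x,y,t$. $S_r(f)=\{x\in C: f(x)\le r\}$. For a subset $S$, $\mathrm{Aff}(S)$ is its affine hull; $\mathrm{ri}(S)$, $\mathrm{rc}(S)$ are the interior and closure of $S$ in the subspace topology of $\mathrm{Aff}(S)$. $]x,y[=\{(1-t)x+ty: t\in[0,1]\}\setminus\{x,y\}$. A set is strictly convex if for any two distinct $x,y$ in its relative closure, $]x,y[$ lies in its relative interior. $f$ is strictly sub-convex if $S_r(f)$ is strictly convex for every $r\in\mathbb{R}$. *)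

theory Defs
  imports "HOL-Analysis.Analysis"
begin

text \<open>Topological real vector spaces (not assumed Hausdorff): a real vector space with a
topology for which addition and scalar multiplication are jointly continuous
(product topologies on the domains).\<close>
class topological_real_vector = real_vector + topological_monoid_add +
  assumes tendsto_scaleR_Pair_tvs:
    "LIM p (nhds c \<times>\<^sub>F nhds a). fst p *\<^sub>R snd p :> nhds (c *\<^sub>R a)"

definition rel_closure :: "'a::topological_real_vector set \<Rightarrow> 'a set" where
  "rel_closure S = (top_of_set (affine hull S)) closure_of S"

definition strictly_convex_set :: "'a::topological_real_vector set \<Rightarrow> bool" where
  "strictly_convex_set S \<longleftrightarrow>
     (\<forall>x\<in>rel_closure S. \<forall>y\<in>rel_closure S. x \<noteq> y \<longrightarrow> open_segment x y \<subseteq> rel_interior S)"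

definition strictly_quasi_convex_on :: "'a::real_vector set \<Rightarrow> ('a \<Rightarrow> real) \<Rightarrow> bool" where
  "strictly_quasi_convex_on C f \<longleftrightarrow>
     (\<forall>x\<in>C. \<forall>y\<in>C. \<forall>t::real. x \<noteq> y \<and> 0 < t \<and> t < 1 \<longrightarrow>
        f ((1 - t) *\<^sub>R x + t *\<^sub>R y) < max (f x) (f y))"

definition strictly_convex_on :: "'a::real_vector set \<Rightarrow> ('a \<Rightarrow> real) \<Rightarrow> bool" where
  "strictly_convex_on C f \<longleftrightarrow>
     (\<forall>x\<in>C. \<forall>y\<in>C. \<forall>t::real. x \<noteq> y \<and> 0 < t \<and> t < 1 \<longrightarrow>
        f ((1 - t) *\<^sub>R x + t *\<^sub>R y) < (1 - t) * f x + t * f y)"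

definition sublevel :: "'a set \<Rightarrow> ('a \<Rightarrow> real) \<Rightarrow> real \<Rightarrow> 'a set" where
  "sublevel C f r = {x \<in> C. f x \<le> r}"

definition strictly_sub_convex_on :: "'a::topological_real_vector set \<Rightarrow> ('a \<Rightarrow> real) \<Rightarrow> bool" where
  "strictly_sub_convex_on C f \<longleftrightarrow> (\<forall>r::real. strictly_convex_set (sublevel C f r))"

end

theory Submission
  imports Defs
begin

definition near :: "'a::topological_space set \<Rightarrow> 'a \<Rightarrow> bool" where
  "near S x \<longleftrightarrow> (\<forall>T. open T \<and> x \<in> T \<longrightarrow> S \<inter> T \<noteq> {})"

lemma rel_closure_iff:
  "x \<in> rel_closure S \<longleftrightarrow> x \<in> affine hull S \<and> near S x"
proof -
  have sub: "S \<subseteq> affine hull S" by (rule hull_subset)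
  have "x \<in> rel_closure S \<longleftrightarrow> x \<in> affine hull S \<and>
     (\<forall>T. x \<in> T \<and> (\<exists>T'. open T' \<and> T = affine hull S \<inter> T') \<longrightarrow> (\<exists>y\<in>S. y \<in> T))"
    unfolding rel_closure_def closure_of_def openin_open by simp
  also have "\<dots> \<longleftrightarrow> x \<in> affine hull S \<and> near S x"
  proof (intro iffI conjI)
    assume L: "x \<in> affine hull S \<and>
     (\<forall>T. x \<in> T \<and> (\<exists>T'. open T' \<and> T = affine hull S \<inter> T') \<longrightarrow> (\<exists>y\<in>S. y \<in> T))"
    show "x \<in> affine hull S" using L by blast
    show "near S x" unfolding near_def
    proof (intro allI impI)
      fix T assume "open T \<and> x \<in> T"
      then obtain y where "y \<in> S" "y \<in> affine hull S \<inter> T" using L by blast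
      then show "S \<inter> T \<noteq> {}" by blast
    qed
  next
    assume R: "x \<in> affine hull S \<and> near S x"
    show "x \<in> affine hull S" using R by blast
    show "\<forall>T. x \<in> T \<and> (\<exists>T'. open T' \<and> T = affine hull S \<inter> T') \<longrightarrow> (\<exists>y\<in>S. y \<in> T)"
    proof (intro allI impI)
      fix T assume "x \<in> T \<and> (\<exists>T'. open T' \<and> T = affine hull S \<inter> T')"
      then obtain T' where "open T'" "T = affine hull S \<inter> T'" "x \<in> T'" by blast
      then obtain y where "y \<in> S" "y \<in> T'" using R unfolding near_def by blast
      then show "\<exists>y\<in>S. y \<in> T" using sub \<open>T = _\<close> by blast
    qed
  qed
  finally show ?thesis .
qed

lemma tvs_scaleR:
  fixes h :: "'b \<Rightarrow> 'a::topological_real_vector"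
  assumes "(h \<longlongrightarrow> a) F"
  shows "((\<lambda>w. c *\<^sub>R h w) \<longlongrightarrow> c *\<^sub>R a) F"
proof -
  have "((\<lambda>w. (c, h w)) \<longlongrightarrow> (c,a)) F" by (intro tendsto_Pair tendsto_const assms)
  hence "filterlim (\<lambda>w. (c,h w)) (nhds c \<times>\<^sub>F nhds a) F" by (simp add: nhds_prod)
  from filterlim_compose[OF tendsto_scaleR_Pair_tvs this] show ?thesis by simp
qed

lemma near_seg:
  fixes S :: "'a::topological_real_vector set"
  assumes cv: "convex S" and nx: "near S x" and ny: "near S y" and t: "0 \<le> t" "t \<le> 1"
  shows "near S ((1-t) *\<^sub>R x + t *\<^sub>R y)"
  unfolding near_def
proof (intro allI impI)
  fix T assume T: "open T \<and> (1-t) *\<^sub>R x + t *\<^sub>R y \<in> T"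
  let ?g = "\<lambda>p::'a\<times>'a. (1-t) *\<^sub>R fst p + t *\<^sub>R snd p"
  have "(?g \<longlongrightarrow> (1-t) *\<^sub>R x + t *\<^sub>R y) (nhds (x,y))"
  proof -
    have "((\<lambda>p. fst p) \<longlongrightarrow> fst (x,y)) (nhds (x,y))" by (rule tendsto_fst) (rule filterlim_ident)
    moreover have "((\<lambda>p. snd p) \<longlongrightarrow> snd (x,y)) (nhds (x,y))" by (rule tendsto_snd) (rule filterlim_ident)
    ultimately show ?thesis by (intro tendsto_add tvs_scaleR) auto
  qed
  hence "eventually (\<lambda>p. ?g p \<in> T) (nhds (x,y))"
    using T topological_tendstoD by blast
  hence "eventually (\<lambda>p. ?g p \<in> T) (nhds x \<times>\<^sub>F nhds y)" by (simp add: nhds_prod)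
  then obtain Pf Pg where P: "eventually Pf (nhds x)" "eventually Pg (nhds y)"
    "\<forall>a b. Pf a \<longrightarrow> Pg b \<longrightarrow> ?g (a,b) \<in> T"
    unfolding eventually_prod_filter by blast
  obtain A where A: "open A" "x \<in> A" "\<forall>a\<in>A. Pf a" using P(1) unfolding eventually_nhds by blast
  obtain B where B: "open B" "y \<in> B" "\<forall>a\<in>B. Pg a" using P(2) unfolding eventually_nhds by blast
  obtain a where a: "a \<in> S" "a \<in> A" using nx A unfolding near_def by blast
  obtain b where b: "b \<in> S" "b \<in> B" using ny B unfolding near_def by blast
  have "?g (a,b) \<in> S" using cv a b t unfolding convex_def by auto
  moreover have "?g (a,b) \<in> T" using P(3) A B a b by blast
  ultimately show "S \<inter> T \<noteq> {}" by blast
qed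

lemma comb: "(1-u) *\<^sub>R (x + a *\<^sub>R d) + u *\<^sub>R (x + b *\<^sub>R d) = x + ((1-u)*a + u*b) *\<^sub>R (d::'a::real_vector)"
proof -
  have "(1-u) *\<^sub>R (x + a *\<^sub>R d) + u *\<^sub>R (x + b *\<^sub>R d) = ((1-u) *\<^sub>R x + u *\<^sub>R x) + (((1-u)*a) *\<^sub>R d + (u*b) *\<^sub>R d)"
    by (simp only: scaleR_add_right scaleR_scaleR add_ac)
  also have "\<dots> = x + ((1-u)*a + u*b) *\<^sub>R d"
    by (simp only: scaleR_left_distrib[symmetric]) simp
  finally show ?thesis .
qed
lemma seg_param: "(1-s) *\<^sub>R x + s *\<^sub>R y = x + s *\<^sub>R (y - (x::'a::real_vector))"
  by (simp add: algebra_simps)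
lemma diff_param: "x + a *\<^sub>R d - (x + b *\<^sub>R d) = (a - b) *\<^sub>R (d::'a::real_vector)"
  by (simp add: algebra_simps)

lemma sqc_apply:
  "strictly_quasi_convex_on C f \<Longrightarrow> x \<in> C \<Longrightarrow> y \<in> C \<Longrightarrow> x \<noteq> y \<Longrightarrow> 0 < t \<Longrightarrow> t < 1
   \<Longrightarrow> f ((1 - t) *\<^sub>R x + t *\<^sub>R y) < max (f x) (f y)"
  unfolding strictly_quasi_convex_on_def by blast

lemma cont_open_pre:
  assumes "continuous_on C f" "open B"
  obtains A where "open A" "A \<inter> C = f -` B \<inter> C"
  using assms unfolding continuous_on_open_invariant by blast

lemma part_quasi:
  fixes C :: "'a::topological_real_vector set" and f :: "'a \<Rightarrow> real"
  assumes sc: "strictly_convex_set C"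
    and ct: "continuous_on C f"
    and q: "strictly_quasi_convex_on C f"
  shows "strictly_sub_convex_on C f"
  unfolding strictly_sub_convex_on_def
proof
  fix r
  define S where "S = sublevel C f r"
  have SC: "S \<subseteq> C" by (auto simp: S_def sublevel_def)
  have memS: "w \<in> S \<longleftrightarrow> w \<in> C \<and> f w \<le> r" for w by (auto simp: S_def sublevel_def)
  have cvS: "convex S"
  proof (rule convexI)
    fix a b and u v :: real assume a: "a \<in> S" and b: "b \<in> S" and uv0: "0 \<le> u" "0 \<le> v" "u + v = 1"
    have uv: "0 \<le> u \<and> 0 \<le> v \<and> u + v = 1" using uv0 by blast
    show "u *\<^sub>R a + v *\<^sub>R b \<in> S"
    proof (cases "a = b \<or> u = 0 \<or> v = 0")
      case True
      then consider "a = b" | "u = 0" | "v = 0" by blast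
      then show ?thesis
      proof cases
        case 1
        have "u *\<^sub>R a + v *\<^sub>R b = (u + v) *\<^sub>R a" using 1 by (simp add: scaleR_left_distrib)
        then show ?thesis using uv a by simp
      next
        case 2 then show ?thesis using uv b by simp
      next
        case 3 then show ?thesis using uv a by simp
      qed
    next
      case False
      have v: "0 < v" "v < 1" "a \<noteq> b" "a \<in> C" "b \<in> C" using uv False a b SC by auto
      then have "f ((1 - v) *\<^sub>R a + v *\<^sub>R b) < max (f a) (f b)"
        using sqc_apply[OF q] by blast
      moreover have "(1 - v) = u" using uv by simp
      moreover have "max (f a) (f b) \<le> r" using a b memS by auto
      moreover have "u *\<^sub>R a + v *\<^sub>R b \<in> C"
      proof -
        have "near C a" "near C b" using v unfolding near_def by blast+
        moreover have "a \<in> affine hull C" "b \<in> affine hull C" using v by (auto intro: hull_inc)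
        ultimately have "a \<in> rel_closure C" "b \<in> rel_closure C"
          by (simp_all add: rel_closure_iff)
        then have "open_segment a b \<subseteq> rel_interior C" using sc v unfolding strictly_convex_set_def by blast
        moreover have "u *\<^sub>R a + v *\<^sub>R b \<in> open_segment a b"
          unfolding in_segment(2) using v \<open>1 - v = u\<close> by (intro conjI exI[of _ v]) auto
        ultimately show ?thesis using rel_interior_subset by blast
      qed
      ultimately show ?thesis using memS by auto
    qed
  qed
  have closedS: "w \<in> C \<Longrightarrow> near S w \<Longrightarrow> w \<in> S" for w
  proof (rule ccontr)
    assume w: "w \<in> C" "near S w" "w \<notin> S"
    then have "f w > r" using memS by auto
    obtain A where A: "open A" "A \<inter> C = f -` {r<..} \<inter> C"
      using cont_open_pre[OF ct open_greaterThan] by blast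
    have "w \<in> A" using A w \<open>f w > r\<close> by auto
    then obtain s where "s \<in> S" "s \<in> A" using w A unfolding near_def by blast
    then have "s \<in> A \<inter> C" using SC by blast
    then have "f s > r" using A by blast
    then show False using \<open>s \<in> S\<close> memS by auto
  qed
  show "strictly_convex_set S"
    unfolding strictly_convex_set_def
  proof (intro ballI impI subsetI)
    fix x y z assume x: "x \<in> rel_closure S" and y: "y \<in> rel_closure S" and xy: "x \<noteq> y"
      and z: "z \<in> open_segment x y"
    have hull: "affine hull S \<subseteq> affine hull C" using SC by (rule hull_mono)
    have nx: "near S x" and ny: "near S y" using x y rel_closure_iff by blast+
    have "near C x" "near C y" using nx ny SC unfolding near_def by blast+
    hence xC: "x \<in> rel_closure C" and yC: "y \<in> rel_closure C"
      using x y hull rel_closure_iff by blast+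
    have segC: "open_segment x y \<subseteq> rel_interior C"
      using sc xC yC xy unfolding strictly_convex_set_def by blast
    obtain u where u: "0 < u" "u < 1" "z = (1 - u) *\<^sub>R x + u *\<^sub>R y"
      using z in_segment(2) by blast
    define d where "d = y - x"
    define z1 where "z1 = x + (u/2) *\<^sub>R d"
    define z2 where "z2 = x + ((1+u)/2) *\<^sub>R d"
    have z1s: "z1 = (1 - u/2) *\<^sub>R x + (u/2) *\<^sub>R y" unfolding z1_def d_def by (rule seg_param[symmetric])
    have z2s: "z2 = (1 - (1+u)/2) *\<^sub>R x + ((1+u)/2) *\<^sub>R y" unfolding z2_def d_def by (rule seg_param[symmetric])
    have "z1 \<in> open_segment x y" unfolding z1s in_segment(2) using xy u by (intro conjI exI[of _ "u/2"]) auto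
    hence "z1 \<in> C" using segC rel_interior_subset by blast
    moreover have "near S z1" unfolding z1s using u by (intro near_seg cvS nx ny) auto
    ultimately have z1S: "z1 \<in> S" using closedS by blast
    have "z2 \<in> open_segment x y" unfolding z2s in_segment(2) using xy u by (intro conjI exI[of _ "(1+u)/2"]) auto
    hence "z2 \<in> C" using segC rel_interior_subset by blast
    moreover have "near S z2" unfolding z2s using u by (intro near_seg cvS nx ny) auto
    ultimately have z2S: "z2 \<in> S" using closedS by blast
    have "z1 - z2 = (u/2 - (1+u)/2) *\<^sub>R d" unfolding z1_def z2_def by (rule diff_param)
    moreover have "u/2 - (1+u)/2 \<noteq> 0" by (simp add: field_simps)
    moreover have "d \<noteq> 0" using xy d_def by auto
    ultimately have z12: "z1 \<noteq> z2" by auto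
    have "(1-u) *\<^sub>R z1 + u *\<^sub>R z2 = x + ((1-u)*(u/2) + u*((1+u)/2)) *\<^sub>R d"
      unfolding z1_def z2_def by (rule comb)
    also have "(1-u)*(u/2) + u*((1+u)/2) = u" by (simp add: field_simps power2_eq_square)
    also have "x + u *\<^sub>R d = z" unfolding u(3) d_def by (rule seg_param[symmetric])
    finally have zz: "(1-u) *\<^sub>R z1 + u *\<^sub>R z2 = z" .
    have zC: "z \<in> rel_interior C" using segC z by blast
    hence "z \<in> C" using rel_interior_subset by blast
    have "f z < max (f z1) (f z2)"
      unfolding zz[symmetric] using sqc_apply[OF q _ _ z12 u(1) u(2)] z1S z2S SC by blast
    hence fz: "f z < r" using z1S z2S memS by auto
    obtain T where T: "open T" "z \<in> T" "T \<inter> affine hull C \<subseteq> C"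
      using zC mem_rel_interior by blast
    obtain A where A: "open A" "A \<inter> C = f -` {..<r} \<inter> C"
      using cont_open_pre[OF ct open_lessThan] by blast
    have "z \<in> A" using A fz \<open>z \<in> C\<close> by auto
    have "(T \<inter> A) \<inter> affine hull S \<subseteq> S"
    proof
      fix w assume "w \<in> (T \<inter> A) \<inter> affine hull S"
      then have "w \<in> C" "w \<in> A" using T hull by auto
      then have "w \<in> A \<inter> C" by blast
      then have "f w < r" using A by blast
      then show "w \<in> S" using memS \<open>w \<in> C\<close> by auto
    qed
    moreover have "z \<in> S" using fz \<open>z \<in> C\<close> memS by auto
    ultimately show "z \<in> rel_interior S"
      unfolding mem_rel_interior using T A \<open>z \<in> A\<close> by (intro exI[of _ "T \<inter> A"]) auto
  qed
qed

lemma cvx_max: "0 < t \<Longrightarrow> t < 1 \<Longrightarrow> (1-t)*a + t*b \<le> max a (b::real)"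
proof -
  assume "0 < t" "t < 1"
  have "(1-t)*a \<le> (1-t)*max a b" using \<open>t<1\<close> by (intro mult_left_mono) auto
  moreover have "t*b \<le> t*max a b" using \<open>0<t\<close> by (intro mult_left_mono) auto
  ultimately have "(1-t)*a + t*b \<le> (1-t)*max a b + t*max a b" by linarith
  also have "\<dots> = max a b" by (simp add: algebra_simps)
  finally show ?thesis .
qed

theorem mainTheorem6:
  fixes C :: "'a::topological_real_vector set" and f :: "'a \<Rightarrow> real"
  assumes "strictly_convex_set C"
    and "continuous_on C f"
  shows "(strictly_quasi_convex_on C f \<longrightarrow> strictly_sub_convex_on C f)
    \<and> (strictly_convex_on C f \<longrightarrow> strictly_sub_convex_on C f)"
proof -
  have "strictly_convex_on C f \<Longrightarrow> strictly_quasi_convex_on C f"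
    unfolding strictly_convex_on_def strictly_quasi_convex_on_def
  proof (intro ballI allI impI)
    fix x y and t :: real
    assume h: "\<forall>x\<in>C. \<forall>y\<in>C. \<forall>t. x \<noteq> y \<and> 0 < t \<and> t < 1 \<longrightarrow>
        f ((1 - t) *\<^sub>R x + t *\<^sub>R y) < (1 - t) * f x + t * f y"
      and xy: "x \<in> C" "y \<in> C" and c: "x \<noteq> y \<and> 0 < t \<and> t < 1"
    have "f ((1 - t) *\<^sub>R x + t *\<^sub>R y) < (1 - t) * f x + t * f y" using h xy c by blast
    moreover have "(1 - t) * f x + t * f y \<le> max (f x) (f y)" using cvx_max c by blast
    ultimately show "f ((1 - t) *\<^sub>R x + t *\<^sub>R y) < max (f x) (f y)" by linarith
  qed
  then show ?thesis using part_quasi assms by blast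
qed

end
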